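(* Let $0<s<1$, $2s<N\le4s$, $1+\frac{2s}{N}<p<\frac{N}{N-2s}$, and $a_1,a_2,\mu_1,\mu_2,\beta>0$. For every $(u,v)\in H_{a_1}\times H_{a_2}$ there exists a unique $l_{(u,v)}\in\mathbb{R}$ such that $l_{(u,v)}\star(u,v)\in F$. Moreover, $l_{(u,v)}$ is the unique critical point of $\Psi_{(u,v)}(l):=E(l\star(u,v))$, and it is a strict maximum.
   Context: $(-\Delta)^s$ is the fractional Laplacian; $H_a:=\{u\in H^s(\mathbb{R}^N):\int u^2=a^2\}$. $(l\star u)(x):=e^{\frac{Nsl}{2}}u(e^{sl}x)$, $l\star(u,v):=(l\star u,l\star v)$. $E(u,v)=\frac12\int(|(-\Delta)^{s/2}u|^2+|(-\Delta)^{s/2}v|^2)dx-\frac1{2p}\int(\mu_1|u|^{2p}+2\beta|u|^p|v|^p+\mu_2|v|^{2p})dx$. $G(u,v):=\int(|(-\Delta)^{s/2}u|^2+|(-\Delta)^{s/2}v|^2)dx-\frac{(p-1)N}{2ps}\int(\mu_1|u|^{2p}+2\beta|u|^p|v|^p+\mu_2|v|^{2p})dx$ and $F:=\{(u,v)\in H_{a_1}\times H_{a_2}:G(u,v)=0\}$. *)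

theory Defs
  imports "HOL-Analysis.Analysis"
begin

definition gagliardo :: "real \<Rightarrow> ('a::euclidean_space \<Rightarrow> real) \<Rightarrow> ennreal" where
  "gagliardo s u = nn_integral lborel (\<lambda>x. nn_integral lborel (\<lambda>y.
      ennreal ((u x - u y)^2 / norm (x - y) powr (real DIM('a) + 2 * s))))"

definition frac_const :: "'a::euclidean_space itself \<Rightarrow> real \<Rightarrow> real" where
  "frac_const (t::'a itself) s =
     1 / (\<integral>z. (1 - cos (z \<bullet> (SOME b. b \<in> (Basis::'a set)))) / norm z powr (real DIM('a) + 2 * s) \<partial>(lborel::'a measure))"

text \<open>kinetic s u = integral of |(-Delta)^(s/2) u|^2 = C(N,s)/2 * [u]^2.\<close>
definition kinetic :: "real \<Rightarrow> ('a::euclidean_space \<Rightarrow> real) \<Rightarrow> real" where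
  "kinetic s u = frac_const TYPE('a) s / 2 * enn2real (gagliardo s u)"

definition Hs :: "real \<Rightarrow> ('a::euclidean_space \<Rightarrow> real) set" where
  "Hs s = {u. u \<in> borel_measurable lborel \<and> integrable lborel (\<lambda>x. (u x)^2) \<and> gagliardo s u < \<infinity>}"

definition Ha :: "real \<Rightarrow> real \<Rightarrow> ('a::euclidean_space \<Rightarrow> real) set" where
  "Ha s a = {u \<in> Hs s. (\<integral>x. (u x)^2 \<partial>lborel) = a^2}"

definition star :: "real \<Rightarrow> real \<Rightarrow> ('a::euclidean_space \<Rightarrow> real) \<Rightarrow> ('a \<Rightarrow> real)" where
  "star s l u = (\<lambda>x. exp (real DIM('a) * s * l / 2) * u (exp (s * l) *\<^sub>R x))"

definition potential :: "real \<Rightarrow> real \<Rightarrow> real \<Rightarrow> real \<Rightarrow> ('a::euclidean_space \<Rightarrow> real) \<Rightarrow> ('a \<Rightarrow> real) \<Rightarrow> real" where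
  "potential p \<mu>1 \<mu>2 \<beta> u v = (\<integral>x. \<mu>1 * \<bar>u x\<bar> powr (2 * p) + 2 * \<beta> * \<bar>u x\<bar> powr p * \<bar>v x\<bar> powr p
        + \<mu>2 * \<bar>v x\<bar> powr (2 * p) \<partial>lborel)"

definition energy :: "real \<Rightarrow> real \<Rightarrow> real \<Rightarrow> real \<Rightarrow> real \<Rightarrow> ('a::euclidean_space \<Rightarrow> real) \<Rightarrow> ('a \<Rightarrow> real) \<Rightarrow> real" where
  "energy s p \<mu>1 \<mu>2 \<beta> u v = 1/2 * (kinetic s u + kinetic s v) - 1 / (2 * p) * potential p \<mu>1 \<mu>2 \<beta> u v"

definition Gfun :: "real \<Rightarrow> real \<Rightarrow> real \<Rightarrow> real \<Rightarrow> real \<Rightarrow> ('a::euclidean_space \<Rightarrow> real) \<Rightarrow> ('a \<Rightarrow> real) \<Rightarrow> real" where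
  "Gfun s p \<mu>1 \<mu>2 \<beta> u v = (kinetic s u + kinetic s v)
      - (p - 1) * real DIM('a) / (2 * p * s) * potential p \<mu>1 \<mu>2 \<beta> u v"

definition Fset :: "real \<Rightarrow> real \<Rightarrow> real \<Rightarrow> real \<Rightarrow> real \<Rightarrow> real \<Rightarrow> real \<Rightarrow> (('a::euclidean_space \<Rightarrow> real) \<times> ('a \<Rightarrow> real)) set" where
  "Fset s p \<mu>1 \<mu>2 \<beta> a1 a2 = {(u, v). u \<in> Ha s a1 \<and> v \<in> Ha s a2 \<and> Gfun s p \<mu>1 \<mu>2 \<beta> u v = 0}"

definition Psi :: "real \<Rightarrow> real \<Rightarrow> real \<Rightarrow> real \<Rightarrow> real \<Rightarrow> ('a::euclidean_space \<Rightarrow> real) \<Rightarrow> ('a \<Rightarrow> real) \<Rightarrow> real \<Rightarrow> real" where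
  "Psi s p \<mu>1 \<mu>2 \<beta> u v l = energy s p \<mu>1 \<mu>2 \<beta> (star s l u) (star s l v)"

end

theory Submission
  imports Defs
begin


lemma nn_integral_scale:
  fixes f :: "'a::euclidean_space \<Rightarrow> ennreal"
  assumes f[measurable]: "f \<in> borel_measurable borel" and c: "c > 0"
  shows "(\<integral>\<^sup>+x. f (c *\<^sub>R x) \<partial>lborel) = ennreal (1 / c ^ DIM('a)) * (\<integral>\<^sup>+x. f x \<partial>lborel)"
proof -
  have "(\<integral>\<^sup>+x. f x \<partial>lborel) = (\<integral>\<^sup>+x. f x \<partial>density (distr lborel borel (\<lambda>x. 0 + c *\<^sub>R x)) (\<lambda>_. \<bar>c\<bar>^DIM('a)))"
    using lborel_affine[of c "0::'a"] c by simp
  also have "\<dots> = ennreal (c ^ DIM('a)) * (\<integral>\<^sup>+x. f (c *\<^sub>R x) \<partial>lborel)"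
    using c by (simp add: nn_integral_density nn_integral_distr nn_integral_cmult)
  finally have "(\<integral>\<^sup>+x. f x \<partial>lborel) = ennreal (c ^ DIM('a)) * (\<integral>\<^sup>+x. f (c *\<^sub>R x) \<partial>lborel)" .
  then have "ennreal (1 / c ^ DIM('a)) * (\<integral>\<^sup>+x. f x \<partial>lborel) = ennreal (1 / c ^ DIM('a)) * ennreal (c ^ DIM('a)) * (\<integral>\<^sup>+x. f (c *\<^sub>R x) \<partial>lborel)"
    by (simp add: mult.assoc)
  also have "ennreal (1 / c ^ DIM('a)) * ennreal (c ^ DIM('a)) = 1"
    using c by (simp add: ennreal_mult'[symmetric])
  finally show ?thesis by simp
qed


lemma nn_scale2:
  fixes g :: "'a::euclidean_space \<Rightarrow> real"
  assumes g[measurable]: "g \<in> borel_measurable borel" and c: "c > 0" and k: "k \<ge> 0"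
  shows "(\<integral>\<^sup>+x. ennreal (k * g (c *\<^sub>R x)) \<partial>lborel) = ennreal (k / c ^ DIM('a)) * (\<integral>\<^sup>+x. ennreal (g x) \<partial>lborel)"
proof -
  have "(\<integral>\<^sup>+x. ennreal (k * g (c *\<^sub>R x)) \<partial>lborel) = (\<integral>\<^sup>+x. ennreal k * ennreal (g (c *\<^sub>R x)) \<partial>lborel)"
    using k by (intro nn_integral_cong) (auto simp: ennreal_mult')
  also have "\<dots> = ennreal k * (\<integral>\<^sup>+x. ennreal (g (c *\<^sub>R x)) \<partial>lborel)"
    by (simp add: nn_integral_cmult)
  also have "(\<integral>\<^sup>+x. ennreal (g (c *\<^sub>R x)) \<partial>lborel) = ennreal (1 / c ^ DIM('a)) * (\<integral>\<^sup>+x. ennreal (g x) \<partial>lborel)"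
    by (rule nn_integral_scale[OF _ c, of "\<lambda>x. ennreal (g x)"]) simp
  finally show ?thesis using k c by (simp add: mult.assoc[symmetric] ennreal_mult'[symmetric])
qed

lemma star_measurable[measurable]:
  fixes u :: "'a::euclidean_space \<Rightarrow> real"
  assumes [measurable]: "u \<in> borel_measurable borel"
  shows "star s l u \<in> borel_measurable borel"
  unfolding star_def by measurable

lemma exp_pow_DIM: "exp (s * l) ^ DIM('a::euclidean_space) = exp (real DIM('a) * s * l)"
  by (simp add: exp_of_nat_mult[symmetric] mult_ac)

lemma star_sq:
  fixes u :: "'a::euclidean_space \<Rightarrow> real"
  assumes [measurable]: "u \<in> borel_measurable borel"
  shows "(\<integral>\<^sup>+x. ennreal ((star s l u x)^2) \<partial>lborel) = (\<integral>\<^sup>+x. ennreal ((u x)^2) \<partial>lborel)"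
proof -
  have "(\<integral>\<^sup>+x. ennreal ((star s l u x)^2) \<partial>lborel) = (\<integral>\<^sup>+x. ennreal (exp (real DIM('a) * s * l) * (\<lambda>y. (u y)^2) (exp (s*l) *\<^sub>R x)) \<partial>lborel)"
    unfolding star_def by (intro nn_integral_cong) (simp add: power_mult_distrib exp_double[symmetric] power2_eq_square exp_add[symmetric])
  also have "\<dots> = ennreal (exp (real DIM('a) * s * l) / exp (s * l) ^ DIM('a)) * (\<integral>\<^sup>+x. ennreal ((u x)^2) \<partial>lborel)"
    by (rule nn_scale2) auto
  finally show ?thesis by (simp add: exp_pow_DIM)
qed


lemma aux_div: "(C::real) > 0 \<Longrightarrow> F * D / A = F * C * (D / (C * A))"
  by (cases "A = 0") (simp_all add: field_simps)

lemma gag_integrand_star: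
  fixes u :: "'a::euclidean_space \<Rightarrow> real"
  assumes c: "c > 0" and E: "E \<ge> 0"
  shows "(E * u (c *\<^sub>R x) - E * u (c *\<^sub>R y))^2 / norm (x - y) powr a
       = E^2 * c powr a * ((u (c *\<^sub>R x) - u (c *\<^sub>R y))^2 / norm (c *\<^sub>R x - c *\<^sub>R y) powr a)"
proof -
  have n: "norm (c *\<^sub>R x - c *\<^sub>R y) = c * norm (x - y)"
    using c by (simp add: scaleR_diff_right[symmetric])
  have 1: "norm (c *\<^sub>R x - c *\<^sub>R y) powr a = c powr a * norm (x - y) powr a"
    unfolding n using c by (simp add: powr_mult)
  have 2: "(E * u (c *\<^sub>R x) - E * u (c *\<^sub>R y))^2 = E^2 * (u (c *\<^sub>R x) - u (c *\<^sub>R y))^2"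
    by (simp add: power_mult_distrib[symmetric] right_diff_distrib)
  have "c powr a > 0" using c by simp
  then show ?thesis unfolding 1 2 by (rule aux_div)
qed


lemma gagliardo_star:
  fixes u :: "'a::euclidean_space \<Rightarrow> real"
  assumes [measurable]: "u \<in> borel_measurable borel"
  shows "gagliardo s (star s l u) = ennreal (exp (2 * s^2 * l)) * gagliardo s u"
proof -
  define c where "c = exp (s * l)"
  define E where "E = exp (real DIM('a) * s * l / 2)"
  define a where "a = real DIM('a) + 2 * s"
  define h where "h = (\<lambda>x y. (u x - u y)^2 / norm (x - y) powr a)"
  have c: "c > 0" and E: "E > 0" by (auto simp: c_def E_def)
  have [measurable]: "(\<lambda>(x, y). ennreal (h x y)) \<in> borel_measurable (lborel \<Otimes>\<^sub>M lborel)"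
    unfolding h_def by measurable
  define H where "H = (\<lambda>x. \<integral>\<^sup>+y. ennreal (h x y) \<partial>lborel)"
  have Hm[measurable]: "H \<in> borel_measurable borel"
  proof -
    have "H \<in> borel_measurable lborel" unfolding H_def
      by (rule lborel.borel_measurable_nn_integral) simp
    then show ?thesis by simp
  qed
  have inner: "(\<integral>\<^sup>+y. ennreal ((star s l u x - star s l u y)^2 / norm (x - y) powr a) \<partial>lborel)
      = ennreal (E^2 * c powr a / c ^ DIM('a)) * H (c *\<^sub>R x)" for x
  proof -
    have hm[measurable]: "h (c *\<^sub>R x) \<in> borel_measurable borel" unfolding h_def by measurable
    have "(\<integral>\<^sup>+y. ennreal ((star s l u x - star s l u y)^2 / norm (x - y) powr a) \<partial>lborel)
        = (\<integral>\<^sup>+y. ennreal (E^2 * c powr a * h (c *\<^sub>R x) (c *\<^sub>R y)) \<partial>lborel)"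
      unfolding star_def E_def[symmetric] c_def[symmetric] h_def
      by (intro nn_integral_cong) (simp add: gag_integrand_star[OF c] E less_imp_le)
    also have "\<dots> = ennreal (E^2 * c powr a / c ^ DIM('a)) * H (c *\<^sub>R x)"
      unfolding H_def by (rule nn_scale2[OF hm c]) simp
    finally show ?thesis .
  qed
  have "gagliardo s (star s l u) = (\<integral>\<^sup>+x. ennreal (E^2 * c powr a / c ^ DIM('a)) * H (c *\<^sub>R x) \<partial>lborel)"
    unfolding gagliardo_def a_def[symmetric] using inner by simp
  also have "\<dots> = ennreal (E^2 * c powr a / c ^ DIM('a)) * (\<integral>\<^sup>+x. H (c *\<^sub>R x) \<partial>lborel)"
    by (simp add: nn_integral_cmult)
  also have "(\<integral>\<^sup>+x. H (c *\<^sub>R x) \<partial>lborel) = ennreal (1 / c ^ DIM('a)) * gagliardo s u"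
    unfolding gagliardo_def a_def[symmetric] using nn_integral_scale[OF Hm c] by (simp add: H_def h_def)
  also have "ennreal (E^2 * c powr a / c ^ DIM('a)) * (ennreal (1 / c ^ DIM('a)) * gagliardo s u)
     = ennreal (E^2 * c powr a / c ^ DIM('a) * (1 / c ^ DIM('a))) * gagliardo s u"
    using c E by (subst ennreal_mult') (auto simp: mult.assoc)
  also have "E^2 * c powr a / c ^ DIM('a) * (1 / c ^ DIM('a)) = exp (2 * s^2 * l)"
  proof -
    have e2: "E^2 = c ^ DIM('a)" unfolding E_def c_def
      by (simp add: exp_pow_DIM power2_eq_square exp_add[symmetric])
    have "c powr a = c ^ DIM('a) * c powr (2 * s)"
      using c by (simp add: a_def powr_add powr_realpow)
    moreover have "c powr (2 * s) = exp (2 * s^2 * l)"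
      unfolding c_def by (simp add: powr_def power2_eq_square mult_ac)
    ultimately show ?thesis using c by (simp add: e2)
  qed
  finally show ?thesis .
qed


lemma integrable_nonneg_iff:
  fixes f :: "'a \<Rightarrow> real"
  assumes "f \<in> borel_measurable M" "\<And>x. f x \<ge> 0"
  shows "integrable M f \<longleftrightarrow> (\<integral>\<^sup>+x. ennreal (f x) \<partial>M) < \<infinity>"
  using assms by (simp add: integrable_iff_bounded)

definition W :: "real \<Rightarrow> real \<Rightarrow> real \<Rightarrow> real \<Rightarrow> ('a \<Rightarrow> real) \<Rightarrow> ('a \<Rightarrow> real) \<Rightarrow> 'a \<Rightarrow> real" where
  "W p \<mu>1 \<mu>2 \<beta> u v x = \<mu>1 * \<bar>u x\<bar> powr (2 * p) + 2 * \<beta> * \<bar>u x\<bar> powr p * \<bar>v x\<bar> powr p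
        + \<mu>2 * \<bar>v x\<bar> powr (2 * p)"

lemma potential_W: "potential p \<mu>1 \<mu>2 \<beta> u v = (\<integral>x. W p \<mu>1 \<mu>2 \<beta> u v x \<partial>lborel)"
  unfolding potential_def W_def ..

lemma W_nonneg: "\<mu>1 \<ge> 0 \<Longrightarrow> \<mu>2 \<ge> 0 \<Longrightarrow> \<beta> \<ge> 0 \<Longrightarrow> W p \<mu>1 \<mu>2 \<beta> u v x \<ge> 0"
  unfolding W_def by (intro add_nonneg_nonneg mult_nonneg_nonneg) auto

lemma W_measurable[measurable]:
  assumes [measurable]: "u \<in> borel_measurable borel" "v \<in> borel_measurable borel"
  shows "W p \<mu>1 \<mu>2 \<beta> u v \<in> borel_measurable borel"
  unfolding W_def[abs_def] by measurable

lemma W_star: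
  fixes u v :: "'a::euclidean_space \<Rightarrow> real"
  shows "W p \<mu>1 \<mu>2 \<beta> (star s l u) (star s l v) x
      = exp (real DIM('a) * s * l * p) * W p \<mu>1 \<mu>2 \<beta> u v (exp (s * l) *\<^sub>R x)"
proof -
  define E where "E = exp (real DIM('a) * s * l / 2)"
  have E: "E > 0" by (simp add: E_def)
  have a: "\<bar>E * w\<bar> powr q = E powr q * \<bar>w\<bar> powr q" for w q
    using E by (simp add: abs_mult powr_mult)
  have e2: "E powr (2 * p) = exp (real DIM('a) * s * l * p)"
    unfolding E_def by (simp add: powr_def)
  have e1: "E powr p * E powr p = exp (real DIM('a) * s * l * p)"
    using E e2 by (simp add: powr_add[symmetric])
  show ?thesis
    unfolding W_def star_def E_def[symmetric] a e2[symmetric]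
    using e1 e2 by (simp add: algebra_simps)
qed

lemma potential_star:
  fixes u v :: "'a::euclidean_space \<Rightarrow> real"
  assumes [measurable]: "u \<in> borel_measurable borel" "v \<in> borel_measurable borel"
    and "\<mu>1 \<ge> 0" "\<mu>2 \<ge> 0" "\<beta> \<ge> 0"
  shows "potential p \<mu>1 \<mu>2 \<beta> (star s l u) (star s l v)
      = exp (real DIM('a) * s * (p - 1) * l) * potential p \<mu>1 \<mu>2 \<beta> u v"
proof -
  have nn: "\<And>u v x. W p \<mu>1 \<mu>2 \<beta> u v x \<ge> 0" using assms by (simp add: W_nonneg)
  have "(\<integral>\<^sup>+x. ennreal (W p \<mu>1 \<mu>2 \<beta> (star s l u) (star s l v) x) \<partial>lborel)
     = (\<integral>\<^sup>+x. ennreal (exp (real DIM('a) * s * l * p) * W p \<mu>1 \<mu>2 \<beta> u v (exp (s * l) *\<^sub>R x)) \<partial>lborel)"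
    by (simp add: W_star)
  also have "\<dots> = ennreal (exp (real DIM('a) * s * l * p) / exp (s * l) ^ DIM('a)) * (\<integral>\<^sup>+x. ennreal (W p \<mu>1 \<mu>2 \<beta> u v x) \<partial>lborel)"
    by (rule nn_scale2) auto
  finally have *: "(\<integral>\<^sup>+x. ennreal (W p \<mu>1 \<mu>2 \<beta> (star s l u) (star s l v) x) \<partial>lborel) = \<dots>" .
  have k: "exp (real DIM('a) * s * l * p) / exp (s * l) ^ DIM('a) = exp (real DIM('a) * s * (p - 1) * l)"
    by (simp add: exp_pow_DIM exp_diff[symmetric] algebra_simps)
  show ?thesis unfolding potential_W
    by (subst (1 2) integral_eq_nn_integral) (auto simp: nn * k enn2real_mult)
qed

lemma star_Hs:
  fixes u :: "'a::euclidean_space \<Rightarrow> real"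
  assumes "u \<in> Hs s"
  shows "star s l u \<in> Hs s"
    and "(\<integral>x. (star s l u x)^2 \<partial>lborel) = (\<integral>x. (u x)^2 \<partial>lborel)"
proof -
  have [measurable]: "u \<in> borel_measurable borel" using assms by (simp add: Hs_def)
  have "integrable lborel (\<lambda>x. (u x)^2)" using assms by (simp add: Hs_def)
  then have fin: "(\<integral>\<^sup>+x. ennreal ((u x)^2) \<partial>lborel) < \<infinity>"
    by (subst (asm) integrable_nonneg_iff) auto
  have g: "gagliardo s u < \<infinity>" using assms by (simp add: Hs_def)
  show "star s l u \<in> Hs s"
    unfolding Hs_def using fin g
    by (auto simp: integrable_nonneg_iff star_sq gagliardo_star ennreal_mult_less_top)
  show "(\<integral>x. (star s l u x)^2 \<partial>lborel) = (\<integral>x. (u x)^2 \<partial>lborel)"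
    by (subst (1 2) integral_eq_nn_integral) (auto simp: star_sq)
qed

lemma star_Ha:
  fixes u :: "'a::euclidean_space \<Rightarrow> real"
  shows "u \<in> Ha s a \<Longrightarrow> star s l u \<in> Ha s a"
  unfolding Ha_def using star_Hs[of u s l] by auto

lemma kinetic_star:
  fixes u :: "'a::euclidean_space \<Rightarrow> real"
  assumes "u \<in> borel_measurable borel"
  shows "kinetic s (star s l u) = exp (2 * s^2 * l) * kinetic s u"
  unfolding kinetic_def using assms by (simp add: gagliardo_star enn2real_mult)


lemma final_real:
  fixes g \<psi> :: "real \<Rightarrow> real"
  assumes K: "K > 0" and P: "P > 0" and c: "c > 0" and m: "m > 0" and al: "0 < \<alpha>" "\<alpha> < \<gamma>"
    and g: "\<And>l. g l = K * exp (\<alpha> * l) - c * P * exp (\<gamma> * l)"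
    and d: "\<And>l. (\<psi> has_real_derivative (m * g l)) (at l)"
  shows "(\<exists>!l. g l = 0) \<and> (\<exists>l. g l = 0 \<and> (\<psi> has_real_derivative 0) (at l)
     \<and> (\<forall>l'. (\<psi> has_real_derivative 0) (at l') \<longrightarrow> l' = l)
     \<and> (\<forall>l'. l' \<noteq> l \<longrightarrow> \<psi> l' < \<psi> l))"
proof -
  define l0 where "l0 = ln (K / (c * P)) / (\<gamma> - \<alpha>)"
  have e0: "exp ((\<gamma> - \<alpha>) * l0) = K / (c * P)"
    unfolding l0_def using K P c al by simp
  have gf: "g t = exp (\<alpha> * t) * (K - c * P * exp ((\<gamma> - \<alpha>) * t))" for t
    by (simp add: g algebra_simps exp_diff[symmetric] exp_add[symmetric])
  have sgn: "K - c * P * exp ((\<gamma> - \<alpha>) * t) = c * P * (exp ((\<gamma> - \<alpha>) * l0) - exp ((\<gamma> - \<alpha>) * t))" for t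
    using e0 c P by (simp add: field_simps)
  have cp: "c * P > 0" using c P by simp
  have gneg: "t > l0 \<Longrightarrow> g t < 0" for t
    unfolding gf sgn using al cp by (intro mult_pos_neg mult_pos_neg) auto
  have gpos: "t < l0 \<Longrightarrow> g t > 0" for t
    unfolding gf sgn using al c P by (intro mult_pos_pos mult_pos_pos) auto
  have g0: "g l0 = 0" unfolding gf sgn by simp
  have gz: "g t = 0 \<longleftrightarrow> t = l0" for t
    using gneg[of t] gpos[of t] g0 by (cases t l0 rule: linorder_cases) auto
  have d0: "(\<psi> has_real_derivative 0) (at l0)" using d[of l0] g0 by simp
  have uniq: "l' = l0" if "(\<psi> has_real_derivative 0) (at l')" for l'
  proof -
    have "m * g l' = 0" using DERIV_unique[OF d[of l'] that] .
    then show ?thesis using m gz by simp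
  qed
  have mx: "\<psi> l' < \<psi> l0" if "l' \<noteq> l0" for l'
  proof (cases "l' < l0")
    case True
    obtain z where z: "l' < z" "z < l0" "\<psi> l0 - \<psi> l' = (l0 - l') * (m * g z)"
      using MVT2[OF True, of \<psi> "\<lambda>t. m * g t"] d by blast
    have "(l0 - l') * (m * g z) > 0" using True m gpos[OF z(2)] by simp
    then show ?thesis using z by simp
  next
    case False
    then have F: "l0 < l'" using that by simp
    obtain z where z: "l0 < z" "z < l'" "\<psi> l' - \<psi> l0 = (l' - l0) * (m * g z)"
      using MVT2[OF F, of \<psi> "\<lambda>t. m * g t"] d by blast
    have "(l' - l0) * (m * g z) < 0" using F m gneg[OF z(1)] by (simp add: mult_pos_neg)
    then show ?thesis using z by simp
  qed
  have "\<exists>!l. g l = 0" using gz by (intro ex1I[of _ l0]) auto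
  moreover have "g l0 = 0 \<and> (\<psi> has_real_derivative 0) (at l0)
     \<and> (\<forall>l'. (\<psi> has_real_derivative 0) (at l') \<longrightarrow> l' = l0)
     \<and> (\<forall>l'. l' \<noteq> l0 \<longrightarrow> \<psi> l' < \<psi> l0)" using g0 d0 uniq mx by blast
  ultimately show ?thesis by blast
qed


lemma ennreal_term_le_suminf: "(f::nat \<Rightarrow> ennreal) k \<le> suminf f"
  using sum_le_suminf[of f "{k}"] by (simp add: summableI)

lemma dyadic_ge1:
  assumes "(t::real) \<ge> 1"
  shows "2 powr real (nat \<lfloor>log 2 t\<rfloor>) \<le> t \<and> t < 2 powr (real (nat \<lfloor>log 2 t\<rfloor>) + 1)"
proof -
  have l: "log 2 t \<ge> 0" using assms by simp
  have k: "real (nat \<lfloor>log 2 t\<rfloor>) = of_int \<lfloor>log 2 t\<rfloor>" using l by simp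
  have t: "t = 2 powr (log 2 t)" using assms by simp
  have "2 powr real (nat \<lfloor>log 2 t\<rfloor>) \<le> 2 powr (log 2 t)"
    unfolding k by (intro powr_mono) auto
  moreover have "2 powr (log 2 t) < 2 powr (real (nat \<lfloor>log 2 t\<rfloor>) + 1)"
    unfolding k by (intro powr_less_mono) linarith+
  ultimately show ?thesis using t by simp
qed

lemma dyadic_lt1:
  assumes "(t::real) > 0" "t < 1"
  shows "2 powr (- (real (nat \<lfloor>- log 2 t\<rfloor>) + 1)) < t \<and> t \<le> 2 powr (- real (nat \<lfloor>- log 2 t\<rfloor>))"
proof -
  have l: "- log 2 t > 0" using assms by simp
  have k: "real (nat \<lfloor>- log 2 t\<rfloor>) = of_int \<lfloor>- log 2 t\<rfloor>" using l by simp
  have t: "t = 2 powr (log 2 t)" using assms by simp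
  have "2 powr (- (real (nat \<lfloor>- log 2 t\<rfloor>) + 1)) < 2 powr (log 2 t)"
    unfolding k by (intro powr_less_mono) linarith+
  moreover have "2 powr (log 2 t) \<le> 2 powr (- real (nat \<lfloor>- log 2 t\<rfloor>))"
    unfolding k by (intro powr_mono) linarith+
  ultimately show ?thesis using t by simp
qed

lemma radial_integrable:
  fixes f :: "'a::euclidean_space \<Rightarrow> real" and A B :: "nat \<Rightarrow> real"
  assumes fm[measurable]: "f \<in> borel_measurable borel" and fnn: "\<And>z. f z \<ge> 0" and f0: "f 0 = 0"
    and Ab: "\<And>z k. 2 powr real k \<le> norm z \<Longrightarrow> norm z < 2 powr (real k + 1) \<Longrightarrow> f z \<le> A k"
    and Bb: "\<And>z k. 2 powr (- (real k + 1)) < norm z \<Longrightarrow> norm z \<le> 2 powr (- real k) \<Longrightarrow> f z \<le> B k"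
    and A0: "\<And>k. A k \<ge> 0" and B0: "\<And>k. B k \<ge> 0"
    and As: "summable (\<lambda>k. A k * (2 powr (real k + 1)) ^ DIM('a))"
    and Bs: "summable (\<lambda>k. B k * (2 powr (- real k)) ^ DIM('a))"
  shows "integrable lborel f"
proof -
  define Osh where "Osh = (\<lambda>k::nat. {z::'a. 2 powr real k \<le> norm z \<and> norm z < 2 powr (real k + 1)})"
  define I where "I = (\<lambda>k::nat. {z::'a. 2 powr (- (real k + 1)) < norm z \<and> norm z \<le> 2 powr (- real k)})"
  have [measurable]: "Osh k \<in> sets borel" "I k \<in> sets borel" for k
    unfolding Osh_def I_def by measurable
  define \<omega> where "\<omega> = unit_ball_vol (real DIM('a))"
  have \<omega>: "\<omega> \<ge> 0" by (simp add: \<omega>_def)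
  define T where "T = (\<lambda>k z. ennreal (A k) * indicator (Osh k) z + ennreal (B k) * indicator (I k) z)"
  have pt: "ennreal (f z) \<le> (\<Sum>k. T k z)" for z
  proof (cases "z = 0")
    case True then show ?thesis using f0 by simp
  next
    case False
    then have t0: "norm z > 0" by simp
    show ?thesis
    proof (cases "norm z \<ge> 1")
      case True
      define k where "k = nat \<lfloor>log 2 (norm z)\<rfloor>"
      have zk: "z \<in> Osh k" using dyadic_ge1[OF True] unfolding Osh_def k_def by simp
      have "ennreal (f z) \<le> T k z" unfolding T_def using zk Ab[of k z] unfolding Osh_def
        by (auto intro!: add_increasing2 ennreal_leI)
      also have "\<dots> \<le> (\<Sum>k. T k z)" by (rule ennreal_term_le_suminf)
      finally show ?thesis .
    next
      case False
      define k where "k = nat \<lfloor>- log 2 (norm z)\<rfloor>"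
      have zk: "z \<in> I k" using dyadic_lt1[OF t0] False unfolding I_def k_def by simp
      have "ennreal (f z) \<le> T k z" unfolding T_def using zk Bb[of k z] unfolding I_def
        by (auto intro!: add_increasing ennreal_leI)
      also have "\<dots> \<le> (\<Sum>k. T k z)" by (rule ennreal_term_le_suminf)
      finally show ?thesis .
    qed
  qed
  have mO: "emeasure lborel (Osh k) \<le> ennreal (\<omega> * (2 powr (real k + 1)) ^ DIM('a))" for k
  proof -
    have "Osh k \<subseteq> cball 0 (2 powr (real k + 1))" unfolding Osh_def by auto
    then have "emeasure lborel (Osh k) \<le> emeasure lborel (cball (0::'a) (2 powr (real k + 1)))"
      by (intro emeasure_mono) auto
    then show ?thesis by (simp add: emeasure_cball \<omega>_def)
  qed
  have mI: "emeasure lborel (I k) \<le> ennreal (\<omega> * (2 powr (- real k)) ^ DIM('a))" for k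
  proof -
    have "I k \<subseteq> cball 0 (2 powr (- real k))" unfolding I_def by auto
    then have "emeasure lborel (I k) \<le> emeasure lborel (cball (0::'a) (2 powr (- real k)))"
      by (intro emeasure_mono) auto
    then show ?thesis by (simp add: emeasure_cball \<omega>_def)
  qed
  define S where "S = (\<lambda>k. \<omega> * (A k * (2 powr (real k + 1)) ^ DIM('a)) + \<omega> * (B k * (2 powr (- real k)) ^ DIM('a)))"
  have Ss: "summable S" unfolding S_def by (intro summable_add summable_mult As Bs)
  have S0: "S k \<ge> 0" for k unfolding S_def using A0 B0 \<omega> by simp
  have "(\<integral>\<^sup>+z. ennreal (f z) \<partial>lborel) \<le> (\<integral>\<^sup>+z. (\<Sum>k. T k z) \<partial>lborel)"
    by (intro nn_integral_mono pt)
  also have "\<dots> = (\<Sum>k. \<integral>\<^sup>+z. T k z \<partial>lborel)"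
    by (rule nn_integral_suminf) (simp add: T_def)
  also have "\<dots> \<le> (\<Sum>k. ennreal (S k))"
  proof (intro suminf_le summableI)
    fix k
    have "(\<integral>\<^sup>+z. T k z \<partial>lborel) = ennreal (A k) * emeasure lborel (Osh k) + ennreal (B k) * emeasure lborel (I k)"
      unfolding T_def by (simp add: nn_integral_add nn_integral_cmult_indicator)
    also have "\<dots> \<le> ennreal (A k) * ennreal (\<omega> * (2 powr (real k + 1)) ^ DIM('a)) + ennreal (B k) * ennreal (\<omega> * (2 powr (- real k)) ^ DIM('a))"
      by (intro add_mono mult_left_mono mO mI) auto
    also have "\<dots> = ennreal (S k)"
      unfolding S_def using A0 B0 \<omega> by (simp add: ennreal_mult'[symmetric] ennreal_plus[symmetric] mult_ac del: ennreal_plus)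
    finally show "(\<integral>\<^sup>+z. T k z \<partial>lborel) \<le> ennreal (S k)" .
  qed
  also have "\<dots> < \<infinity>" using ennreal_suminf_neq_top[OF Ss S0] by (simp add: top.not_eq_extremum)
  finally show ?thesis using fnn by (simp add: integrable_iff_bounded)
qed


lemma one_minus_cos_le: "1 - cos (x::real) \<le> x^2 / 2"
proof -
  have "cos x = 1 - 2 * (sin (x/2))^2" using cos_double_sin[of "x/2"] by simp
  moreover have "(sin (x/2))^2 \<le> (x/2)^2"
    using abs_sin_x_le_abs_x[of "x/2"] by (metis abs_ge_zero power2_abs power_mono)
  ultimately show ?thesis by (simp add: power_divide)
qed

lemma geomA: "2 * (2 powr real k) powr (-a) * (2 powr (real k + 1)) ^ n
   = (2 * 2 powr real n) * (2 powr (real n - a)) ^ k"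
  by (simp add: powr_power powr_powr powr_add[symmetric] algebra_simps)

lemma geomB: "((2 powr (- (real k + 1))) powr e + (2 powr (- real k)) powr e) / 2 * (2 powr (- real k)) ^ n
   = ((2 powr (-e) + 1) / 2) * (2 powr (- (e + real n))) ^ k"
  by (simp add: powr_power powr_powr powr_add[symmetric] algebra_simps add_divide_distrib)

lemma frac_integrable:
  fixes b :: "'a::euclidean_space"
  assumes s: "0 < s" "s < 1" and b: "b \<in> Basis"
  shows "integrable lborel (\<lambda>z::'a. (1 - cos (z \<bullet> b)) / norm z powr (real DIM('a) + 2 * s))"
proof -
  define a where "a = real DIM('a) + 2 * s"
  define e where "e = 2 - a"
  have a0: "a > 0" using s by (simp add: a_def)
  define f where "f = (\<lambda>z::'a. (1 - cos (z \<bullet> b)) / norm z powr a)"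
  define A where "A = (\<lambda>k::nat. 2 * (2 powr real k) powr (-a))"
  define B where "B = (\<lambda>k::nat. ((2 powr (- (real k + 1))) powr e + (2 powr (- real k)) powr e) / 2)"
  have fnn: "f z \<ge> 0" for z unfolding f_def by (simp add: divide_nonneg_nonneg)
  have "integrable lborel f"
  proof (rule radial_integrable[where A=A and B=B])
    show "f \<in> borel_measurable borel" unfolding f_def by measurable
    show "f z \<ge> 0" for z by (rule fnn)
    show "f 0 = 0" unfolding f_def using a0 by simp
    show "A k \<ge> 0" for k unfolding A_def by simp
    show "B k \<ge> 0" for k unfolding B_def by simp
    show "f z \<le> A k" if "2 powr real k \<le> norm z" "norm z < 2 powr (real k + 1)" for z k
    proof -
      have t: "norm z > 0" using that(1) powr_gt_zero[of 2 "real k"] by linarith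
      have "f z \<le> 2 / norm z powr a" unfolding f_def using t
        using cos_ge_minus_one[of "z \<bullet> b"] by (intro divide_right_mono) auto
      also have "\<dots> \<le> 2 / (2 powr real k) powr a"
        using that(1) a0 by (intro divide_left_mono powr_mono2 mult_pos_pos) auto
      also have "\<dots> = A k" unfolding A_def by (simp add: powr_minus divide_inverse)
      finally show ?thesis .
    qed
    show "f z \<le> B k" if "2 powr (- (real k + 1)) < norm z" "norm z \<le> 2 powr (- real k)" for z k
    proof -
      have t: "norm z > 0" using that(1) powr_gt_zero[of 2 "- (real k + 1)"] by linarith
      have "1 - cos (z \<bullet> b) \<le> (norm z)^2 / 2"
      proof -
        have "\<bar>z \<bullet> b\<bar>^2 \<le> (norm z)^2" by (rule power_mono[OF Basis_le_norm[OF b]]) simp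
        then have "(z \<bullet> b)^2 \<le> (norm z)^2" by simp
        then show ?thesis using one_minus_cos_le[of "z \<bullet> b"] by linarith
      qed
      then have "f z \<le> (norm z)^2 / 2 / norm z powr a" unfolding f_def
        by (rule divide_right_mono) simp
      also have "\<dots> = norm z powr e / 2"
      proof -
        have "(norm z)^2 = norm z powr 2" using t by (simp add: powr_numeral)
        moreover have "norm z powr e = norm z powr 2 / norm z powr a" unfolding e_def by (rule powr_diff)
        ultimately show ?thesis by simp
      qed
      also have "norm z powr e \<le> (2 powr (- (real k + 1))) powr e + (2 powr (- real k)) powr e"
      proof (cases "e \<ge> 0")
        case True
        have "norm z powr e \<le> (2 powr (- real k)) powr e" by (rule powr_mono2) (use True that t in auto)
        then show ?thesis using powr_ge_zero[of "2 powr (- (real k + 1))" e] by linarith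
      next
        case False
        have "norm z powr e \<le> (2 powr (- (real k + 1))) powr e" by (rule powr_mono2') (use False that t in auto)
        then show ?thesis using powr_ge_zero[of "2 powr (- real k)" e] by linarith
      qed
      then have "norm z powr e / 2 \<le> B k" unfolding B_def by (simp add: divide_right_mono)
      finally show ?thesis .
    qed
    have "2 powr (real DIM('a) - a) < 2 powr 0" using s by (intro powr_less_mono) (auto simp: a_def)
    then have r1: "norm (2 powr (real DIM('a) - a)) < 1" by simp
    show "summable (\<lambda>k. A k * (2 powr (real k + 1)) ^ DIM('a))"
      unfolding A_def geomA by (intro summable_mult summable_geometric r1)
    have "2 powr (- (e + real DIM('a))) < 2 powr 0" using s by (intro powr_less_mono) (auto simp: e_def a_def)
    then have r2: "norm (2 powr (- (e + real DIM('a)))) < 1" by simp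
    show "summable (\<lambda>k. B k * (2 powr (- real k)) ^ DIM('a))"
      unfolding B_def geomB by (intro summable_mult summable_geometric r2)
  qed
  then show ?thesis unfolding f_def a_def .
qed

lemma frac_const_pos:
  assumes s: "0 < s" "s < 1"
  shows "frac_const TYPE('a::euclidean_space) s > 0"
proof -
  define b :: 'a where "b = (SOME b. b \<in> Basis)"
  have b: "b \<in> Basis" unfolding b_def by (rule someI_ex) (use nonempty_Basis in blast)
  define f where "f = (\<lambda>z::'a. (1 - cos (z \<bullet> b)) / norm z powr (real DIM('a) + 2 * s))"
  have fi: "integrable lborel f" unfolding f_def by (rule frac_integrable[OF s b])
  have fnn: "f z \<ge> 0" for z unfolding f_def by (simp add: divide_nonneg_nonneg)
  have fpos: "f z > 0" if "z \<in> ball (pi *\<^sub>R b) 1" for z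
  proof -
    have "\<bar>(z - pi *\<^sub>R b) \<bullet> b\<bar> \<le> norm (z - pi *\<^sub>R b)" by (rule Basis_le_norm[OF b])
    also have "\<dots> < 1" using that by (simp add: dist_norm norm_minus_commute)
    finally have "\<bar>z \<bullet> b - pi\<bar> < 1" using b by (simp add: inner_diff_left)
    then have zb: "pi / 2 < z \<bullet> b" "z \<bullet> b < 3 * pi / 2" using pi_gt3 by linarith+
    then have "cos (z \<bullet> b) < 0" by (rule cos_lt_zero_pi)
    moreover have "z \<noteq> 0" using zb pi_gt3 by auto
    ultimately show ?thesis unfolding f_def by simp
  qed
  have I: "(\<integral>z. f z \<partial>lborel) > 0"
  proof (rule ccontr)
    assume "\<not> (\<integral>z. f z \<partial>lborel) > 0"
    moreover have "(\<integral>z. f z \<partial>lborel) \<ge> 0" using fnn by simp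
    ultimately have "(\<integral>z. f z \<partial>lborel) = 0" by simp
    then have "AE z in lborel. f z = 0" using integral_nonneg_eq_0_iff_AE[OF fi] fnn by simp
    then have "AE z in lborel. z \<notin> ball (pi *\<^sub>R b) 1" by (rule eventually_mono) (use fpos in force)
    then have "emeasure lborel (ball (pi *\<^sub>R b) 1) = 0"
      by (subst (asm) AE_iff_measurable[of "ball (pi *\<^sub>R b) 1"]) auto
    then show False using unit_ball_vol_pos[of "real DIM('a)"] by (simp add: emeasure_ball)
  qed
  then show ?thesis unfolding frac_const_def f_def b_def by simp
qed


lemma AE_ex_lborel:
  assumes "AE x in (lborel::'a::euclidean_space measure). P x"
  shows "\<exists>x. P x"
proof (rule ccontr)
  assume np: "\<not> (\<exists>x. P x)"
  from assms obtain N where N: "{x\<in>space lborel. \<not> P x} \<subseteq> N" "N \<in> null_sets lborel"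
    using assms unfolding eventually_ae_filter by blast
  have "UNIV \<subseteq> N" using N(1) np by auto
  then have "N = UNIV" by auto
  then show False using N(2) by (auto simp: null_sets_def)
qed

lemma gagliardo_pos: "u \<in> Ha s a \<Longrightarrow> a > 0 \<Longrightarrow> gagliardo s (u::'a::euclidean_space \<Rightarrow> real) > 0"
proof (rule ccontr)
  assume uH: "u \<in> Ha s a" and a: "a > 0" and ng: "\<not> gagliardo s u > 0"
  have [measurable]: "u \<in> borel_measurable borel" using uH by (simp add: Ha_def Hs_def)
  have ui: "integrable lborel (\<lambda>x. (u x)^2)" using uH by (simp add: Ha_def Hs_def)
  have ua: "(\<integral>x. (u x)^2 \<partial>lborel) = a^2" using uH by (simp add: Ha_def)
  define b where "b = real DIM('a) + 2 * s"
  define h where "h = (\<lambda>x y. (u x - u y)^2 / norm (x - y) powr b)"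
  have hm[measurable]: "(\<lambda>(x, y). ennreal (h x y)) \<in> borel_measurable (lborel \<Otimes>\<^sub>M lborel)"
    unfolding h_def by measurable
  have Hm: "(\<lambda>x. \<integral>\<^sup>+y. ennreal (h x y) \<partial>lborel) \<in> borel_measurable lborel"
    by (rule lborel.borel_measurable_nn_integral) simp
  have g0: "gagliardo s u = 0" using ng by (simp add: not_less)
  then have "(\<integral>\<^sup>+x. (\<integral>\<^sup>+y. ennreal (h x y) \<partial>lborel) \<partial>lborel) = 0"
    unfolding gagliardo_def h_def b_def .
  then have "AE x in lborel. (\<integral>\<^sup>+y. ennreal (h x y) \<partial>lborel) = 0"
    using nn_integral_0_iff_AE[OF Hm] by simp
  moreover have "AE y in lborel. u y = u x" if "(\<integral>\<^sup>+y. ennreal (h x y) \<partial>lborel) = 0" for x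
  proof -
    note that
    moreover have "(\<lambda>y. ennreal (h x y)) \<in> borel_measurable lborel" unfolding h_def by measurable
    ultimately have "AE y in lborel. ennreal (h x y) = 0" using nn_integral_0_iff_AE by blast
    then show "AE y in lborel. u y = u x"
      using AE_lborel_singleton[of x]
    proof (eventually_elim)
      case (elim y)
      then have "h x y \<le> 0" by (simp add: ennreal_eq_0_iff)
      moreover have "norm (x - y) powr b > 0" using elim by simp
      ultimately have "(u x - u y)^2 \<le> 0" unfolding h_def by (simp add: divide_le_0_iff)
      then show ?case by simp
    qed
  qed
  ultimately have "AE x in lborel. AE y in lborel. u y = u x" by (auto elim: eventually_mono)
  then obtain x0 where x0: "AE y in lborel. u y = u x0" using AE_ex_lborel by blast
  have "integrable lborel (\<lambda>_::'a. (u x0)^2)"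
    using x0 by (intro integrable_cong_AE_imp[OF ui]) (auto elim: eventually_mono)
  then have k0: "u x0 = 0"
  proof (rule contrapos_pp)
    assume "u x0 \<noteq> 0"
    then show "\<not> integrable lborel (\<lambda>_::'a. (u x0)^2)"
      by (simp add: integrable_iff_bounded ennreal_mult_top)
  qed
  have "(\<integral>x. (u x)^2 \<partial>lborel) = (\<integral>x. 0 \<partial>(lborel::'a measure))"
    using x0 k0 by (intro integral_cong_AE) (auto elim: eventually_mono)
  then have "a^2 = 0" using ua by simp
  then show False using a by simp
qed


lemma ennreal_half_bound:
  assumes "ennreal (2 * m) \<le> X + ennreal m" "m \<ge> 0"
  shows "ennreal m \<le> X"
proof (cases X)
  case (real x)
  then have "ennreal (2 * m) \<le> ennreal (x + m)" using assms by (simp add: ennreal_plus[symmetric] del: ennreal_plus)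
  then have "2 * m \<le> x + m" using assms real by (subst (asm) ennreal_le_iff) auto
  then show ?thesis using real by (auto intro!: ennreal_leI)
next
  case top then show ?thesis by simp
qed

lemma key_level:
  fixes u :: "'a::euclidean_space \<Rightarrow> real"
  assumes um[measurable]: "u \<in> borel_measurable borel" and lam: "L > 0" and r: "r > 0" and s: "s \<ge> 0"
    and half: "emeasure lborel {y. L/2 < \<bar>u y\<bar>} \<le> ennreal (unit_ball_vol (real DIM('a)) * r ^ DIM('a) / 2)"
  shows "emeasure lborel {x. L < \<bar>u x\<bar>} * ennreal ((L/2)^2 / r powr (real DIM('a) + 2 * s) * (unit_ball_vol (real DIM('a)) * r ^ DIM('a) / 2))
          \<le> gagliardo s u"
proof -
  define a where "a = real DIM('a) + 2 * s"
  define m where "m = unit_ball_vol (real DIM('a)) * r ^ DIM('a) / 2"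
  define c where "c = (L/2)^2 / r powr a"
  define T where "T = {y. \<bar>u y\<bar> \<le> L/2}"
  define S where "S = {x. L < \<bar>u x\<bar>}"
  define h where "h = (\<lambda>x y. (u x - u y)^2 / norm (x - y) powr a)"
  have [measurable]: "T \<in> sets borel" "S \<in> sets borel" unfolding T_def S_def by measurable
  have m0: "m \<ge> 0" unfolding m_def using r by simp
  have c0: "c \<ge> 0" unfolding c_def by simp
  have bT: "ennreal m \<le> emeasure lborel (ball x r \<inter> T)" for x
  proof -
    have "ennreal (2 * m) = emeasure lborel (ball x r)"
      using r by (simp add: emeasure_ball m_def)
    also have "\<dots> \<le> emeasure lborel ((ball x r \<inter> T) \<union> {y. L/2 < \<bar>u y\<bar>})"
      by (intro emeasure_mono) (auto simp: T_def)
    also have "\<dots> \<le> emeasure lborel (ball x r \<inter> T) + emeasure lborel {y. L/2 < \<bar>u y\<bar>}"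
      by (intro emeasure_subadditive) auto
    also have "\<dots> \<le> emeasure lborel (ball x r \<inter> T) + ennreal m"
      using half unfolding m_def by (intro add_left_mono)
    finally show ?thesis using m0 by (rule ennreal_half_bound)
  qed
  have pt: "indicator S x * (ennreal c * indicator (ball x r \<inter> T) y) \<le> ennreal (h x y)" for x y
  proof (cases "x \<in> S \<and> y \<in> ball x r \<inter> T")
    case True
    then have ux: "L < \<bar>u x\<bar>" and uy: "\<bar>u y\<bar> \<le> L/2" and d: "dist x y < r"
      by (auto simp: S_def T_def)
    have "x \<noteq> y" using ux uy lam by auto
    then have n0: "norm (x - y) > 0" by simp
    have "L/2 \<le> \<bar>u x - u y\<bar>" using ux uy by linarith
    then have "(L/2)^2 \<le> \<bar>u x - u y\<bar>^2" by (rule power_mono) (use lam in simp)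
    then have num: "(L/2)^2 \<le> (u x - u y)^2" by simp
    have den: "norm (x - y) powr a \<le> r powr a"
      using d n0 s unfolding a_def dist_norm by (intro powr_mono2) auto
    have "c \<le> h x y" unfolding c_def h_def
      by (rule frac_le) (use num den n0 in auto)
    then show ?thesis using True by (simp add: ennreal_leI)
  next
    case False
    then show ?thesis by (auto simp: indicator_def)
  qed
  have hm[measurable]: "(\<lambda>(x, y). ennreal (h x y)) \<in> borel_measurable (lborel \<Otimes>\<^sub>M lborel)"
    unfolding h_def by measurable
  have inner: "indicator S x * ennreal (c * m) \<le> (\<integral>\<^sup>+y. ennreal (h x y) \<partial>lborel)" for x
  proof -
    have "indicator S x * ennreal (c * m) \<le> indicator S x * (ennreal c * emeasure lborel (ball x r \<inter> T))"
      using c0 m0 bT[of x] by (auto simp: ennreal_mult' intro!: mult_left_mono)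
    also have "\<dots> = (\<integral>\<^sup>+y. (indicator S x * ennreal c) * indicator (ball x r \<inter> T) y \<partial>lborel)"
      by (subst nn_integral_cmult_indicator) (auto simp: mult.assoc)
    also have "\<dots> \<le> (\<integral>\<^sup>+y. ennreal (h x y) \<partial>lborel)"
      by (intro nn_integral_mono) (simp add: pt mult.assoc)
    finally show ?thesis .
  qed
  have "emeasure lborel S * ennreal (c * m) = (\<integral>\<^sup>+x. indicator S x * ennreal (c * m) \<partial>lborel)"
    by (simp add: nn_integral_multc)
  also have "\<dots> \<le> (\<integral>\<^sup>+x. (\<integral>\<^sup>+y. ennreal (h x y) \<partial>lborel) \<partial>lborel)"
    by (intro nn_integral_mono inner)
  also have "\<dots> = gagliardo s u" unfolding gagliardo_def h_def a_def ..
  finally show ?thesis unfolding S_def c_def m_def a_def .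
qed


lemma ennreal_mult_le_imp:
  assumes "X * ennreal Q \<le> ennreal g" "Q > 0" "g \<ge> 0"
  shows "X \<le> ennreal (g / Q)"
proof (cases X)
  case (real e)
  then have "ennreal (e * Q) \<le> ennreal g" using assms by (simp add: ennreal_mult')
  then have "e * Q \<le> g" using assms by (subst (asm) ennreal_le_iff) auto
  then have "e \<le> g / Q" using assms by (simp add: field_simps)
  then show ?thesis using real by (auto intro!: ennreal_leI)
next
  case top
  then show ?thesis using assms by (simp add: ennreal_mult_top top_unique)
qed

lemma weak_step:
  fixes u :: "'a::euclidean_space \<Rightarrow> real"
  assumes um[measurable]: "u \<in> borel_measurable borel" and s: "s > 0"
    and G: "gagliardo s u < \<infinity>" and q0: "q0 > 0" and A: "A > 0"
    and weak: "\<And>L. L > 0 \<Longrightarrow> emeasure lborel {x. L < \<bar>u x\<bar>} \<le> ennreal (A * L powr (- q0))"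
  shows "\<exists>A'>0. \<forall>L>0. emeasure lborel {x. L < \<bar>u x\<bar>} \<le> ennreal (A' * L powr (- (2 + 2 * s * q0 / real DIM('a))))"
proof -
  define N where "N = real DIM('a)"
  have N: "N > 0" unfolding N_def by simp
  define \<omega> where "\<omega> = unit_ball_vol N"
  have \<omega>: "\<omega> > 0" unfolding \<omega>_def using N by simp
  define \<kappa> where "\<kappa> = (2 * A * 2 powr q0 / \<omega>) powr (1 / N)"
  have \<kappa>: "\<kappa> > 0" unfolding \<kappa>_def using A \<omega> by simp
  have \<kappa>N: "\<kappa> ^ DIM('a) = 2 * A * 2 powr q0 / \<omega>"
    unfolding \<kappa>_def using A \<omega> N by (simp add: powr_power N_def)
  define g where "g = enn2real (gagliardo s u)"
  have g0: "g \<ge> 0" unfolding g_def by simp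
  have Gg: "gagliardo s u = ennreal g" unfolding g_def using G by (simp add: less_top)
  define e where "e = 2 + 2 * s * q0 / N"
  define A' where "A' = 8 * (g + 1) * \<kappa> powr (2 * s) / \<omega>"
  have A': "A' > 0" unfolding A'_def using g0 \<kappa> \<omega> by simp
  have "\<forall>L>0. emeasure lborel {x. L < \<bar>u x\<bar>} \<le> ennreal (A' * L powr (- e))"
  proof (intro allI impI)
    fix L :: real assume L: "L > 0"
    define r where "r = \<kappa> * L powr (- q0 / N)"
    have r: "r > 0" unfolding r_def using \<kappa> L by simp
    have rN: "r ^ DIM('a) = (2 * A * 2 powr q0 / \<omega>) * L powr (- q0)"
    proof -
      have "(L powr (- q0 / N)) ^ DIM('a) = L powr (- q0)"
        using L N by (simp add: powr_power N_def)
      then show ?thesis unfolding r_def power_mult_distrib \<kappa>N by simp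
    qed
    have "emeasure lborel {y. L/2 < \<bar>u y\<bar>} \<le> ennreal (A * (L/2) powr (- q0))"
      using weak[of "L/2"] L by simp
    also have "A * (L/2) powr (- q0) = \<omega> * r ^ DIM('a) / 2"
      unfolding rN using \<omega> L by (simp add: powr_divide powr_minus field_simps)
    finally have half: "emeasure lborel {y. L/2 < \<bar>u y\<bar>} \<le> ennreal (unit_ball_vol (real DIM('a)) * r ^ DIM('a) / 2)"
      unfolding \<omega>_def N_def .
    define Q where "Q = (L/2)^2 / r powr (real DIM('a) + 2 * s) * (unit_ball_vol (real DIM('a)) * r ^ DIM('a) / 2)"
    have key: "emeasure lborel {x. L < \<bar>u x\<bar>} * ennreal Q \<le> ennreal g"
      using key_level[OF um L r, of s] half s unfolding Q_def Gg by simp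
    have Q_eq: "Q = (\<omega> * \<kappa> powr (- (2 * s)) / 8) * L powr e"
    proof -
      have rp: "r powr (real DIM('a) + 2 * s) = r ^ DIM('a) * r powr (2 * s)"
        using r by (simp add: powr_add powr_realpow)
      have r2s: "r powr (2 * s) = \<kappa> powr (2 * s) * L powr (- (2 * s * q0 / N))"
        unfolding r_def using \<kappa> L by (simp add: powr_mult powr_powr mult_ac)
      have "Q = (L/2)^2 / (r ^ DIM('a) * r powr (2 * s)) * (\<omega> * r ^ DIM('a) / 2)"
        unfolding Q_def rp \<omega>_def N_def ..
      also have "\<dots> = (L/2)^2 * \<omega> / 2 / r powr (2 * s)"
        using r by (simp add: field_simps)
      also have "\<dots> = (\<omega> * \<kappa> powr (- (2 * s)) / 8) * (L^2 * L powr (2 * s * q0 / N))"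
        unfolding r2s using \<kappa> L by (simp add: powr_minus field_simps power2_eq_square)
      also have "L^2 * L powr (2 * s * q0 / N) = L powr e"
        unfolding e_def using L by (simp add: powr_add powr_numeral)
      finally show ?thesis .
    qed
    have Q: "Q > 0" unfolding Q_eq using \<omega> \<kappa> L by simp
    have "emeasure lborel {x. L < \<bar>u x\<bar>} \<le> ennreal (g / Q)"
      by (rule ennreal_mult_le_imp[OF key Q g0])
    also have "g / Q \<le> A' * L powr (- e)"
    proof -
      have "g / Q \<le> (g + 1) / Q" using Q by (simp add: divide_right_mono)
      also have "(g + 1) / Q = A' * L powr (- e)"
        unfolding Q_eq A'_def using \<omega> \<kappa> L by (simp add: powr_minus field_simps)
      finally show ?thesis .
    qed
    finally show "emeasure lborel {x. L < \<bar>u x\<bar>} \<le> ennreal (A' * L powr (- e))" by (simp add: ennreal_leI)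
  qed
  then show ?thesis using A' unfolding e_def N_def by blast
qed


lemma weak_init:
  fixes u :: "'a::euclidean_space \<Rightarrow> real"
  assumes um[measurable]: "u \<in> borel_measurable borel" and ui: "integrable lborel (\<lambda>x. (u x)^2)"
  shows "\<exists>A>0. \<forall>L>0. emeasure lborel {x. L < \<bar>u x\<bar>} \<le> ennreal (A * L powr (- 2))"
proof -
  define I where "I = (\<integral>x. (u x)^2 \<partial>lborel)"
  have I0: "I \<ge> 0" unfolding I_def by simp
  have II: "(\<integral>\<^sup>+x. ennreal ((u x)^2) \<partial>lborel) = ennreal I"
    unfolding I_def by (rule nn_integral_eq_integral[OF ui]) simp
  have "emeasure lborel {x. L < \<bar>u x\<bar>} \<le> ennreal ((I + 1) * L powr (- 2))" if L: "L > 0" for L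
  proof -
    have "emeasure lborel {x. L < \<bar>u x\<bar>} * ennreal (L^2) = (\<integral>\<^sup>+x. indicator {x. L < \<bar>u x\<bar>} x * ennreal (L^2) \<partial>lborel)"
      by (simp add: nn_integral_multc)
    also have "\<dots> \<le> (\<integral>\<^sup>+x. ennreal ((u x)^2) \<partial>lborel)"
    proof (intro nn_integral_mono)
      fix x
      show "indicator {x. L < \<bar>u x\<bar>} x * ennreal (L^2) \<le> ennreal ((u x)^2)"
      proof (cases "L < \<bar>u x\<bar>")
        case True
        then have "L^2 \<le> \<bar>u x\<bar>^2" using L by (intro power_mono) auto
        then show ?thesis using True by (simp add: ennreal_leI)
      qed simp
    qed
    finally have "emeasure lborel {x. L < \<bar>u x\<bar>} \<le> ennreal (I / L^2)"
      unfolding II using L I0 by (intro ennreal_mult_le_imp) auto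
    also have "I / L^2 \<le> (I + 1) * L powr (- 2)"
      using L by (simp add: powr_minus powr_numeral divide_inverse mult_right_mono)
    finally show ?thesis by (simp add: ennreal_leI)
  qed
  moreover have "I + 1 > 0" using I0 by simp
  ultimately show ?thesis by blast
qed

lemma weak_iter:
  fixes u :: "'a::euclidean_space \<Rightarrow> real"
  assumes um[measurable]: "u \<in> borel_measurable borel" and ui: "integrable lborel (\<lambda>x. (u x)^2)"
    and s: "s > 0" "2 * s < real DIM('a)" and G: "gagliardo s u < \<infinity>"
  defines "\<theta> \<equiv> 2 * s / real DIM('a)"
  defines "qs \<equiv> 2 / (1 - \<theta>)"
  shows "\<exists>A>0. \<forall>L>0. emeasure lborel {x. L < \<bar>u x\<bar>} \<le> ennreal (A * L powr (- (qs - (qs - 2) * \<theta> ^ k)))"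
proof (induction k)
  case 0
  then show ?case using weak_init[OF um ui] by simp
next
  case (Suc k)
  have th: "0 < \<theta>" "\<theta> < 1" unfolding \<theta>_def using s by auto
  have qs: "qs \<ge> 2" unfolding qs_def using th by (simp add: field_simps)
  define q0 where "q0 = qs - (qs - 2) * \<theta> ^ k"
  have "(qs - 2) * \<theta> ^ k \<le> (qs - 2) * 1"
    using qs th by (intro mult_left_mono power_le_one) auto
  then have q0: "q0 > 0" unfolding q0_def by simp
  obtain A where A: "A > 0" "\<forall>L>0. emeasure lborel {x. L < \<bar>u x\<bar>} \<le> ennreal (A * L powr (- q0))"
    using Suc.IH unfolding q0_def by blast
  have "2 + 2 * s * q0 / real DIM('a) = qs - (qs - 2) * \<theta> ^ Suc k"
  proof -
    have "2 + 2 * s * q0 / real DIM('a) = 2 + \<theta> * q0" unfolding \<theta>_def by simp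
    also have "\<dots> = 2 + \<theta> * qs - (qs - 2) * \<theta> ^ Suc k" unfolding q0_def by (simp add: algebra_simps)
    also have "2 + \<theta> * qs = qs" unfolding qs_def using th by (simp add: field_simps)
    finally show ?thesis .
  qed
  then show ?case using weak_step[OF um s(1) G q0 A(1)] A(2) by simp
qed

lemma weak_to_strong:
  fixes u :: "'a::euclidean_space \<Rightarrow> real"
  assumes um[measurable]: "u \<in> borel_measurable borel" and ui: "integrable lborel (\<lambda>x. (u x)^2)"
    and A: "A > 0" and weak: "\<And>L. L > 0 \<Longrightarrow> emeasure lborel {x. L < \<bar>u x\<bar>} \<le> ennreal (A * L powr (- q1))"
    and q: "2 \<le> q" "q < q1"
  shows "integrable lborel (\<lambda>x. \<bar>u x\<bar> powr q)"
proof -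
  define E where "E = (\<lambda>k::nat. {x. 2 powr (real k - 1) < \<bar>u x\<bar>})"
  have [measurable]: "E k \<in> sets borel" for k unfolding E_def by measurable
  define T where "T = (\<lambda>k x. ennreal (2 powr ((real k + 1) * q)) * indicator (E k) x)"
  have pt: "ennreal (\<bar>u x\<bar> powr q) \<le> ennreal ((u x)^2) + (\<Sum>k. T k x)" for x
  proof (cases "\<bar>u x\<bar> \<ge> 1")
    case True
    define k where "k = nat \<lfloor>log 2 \<bar>u x\<bar>\<rfloor>"
    have kk: "2 powr real k \<le> \<bar>u x\<bar>" "\<bar>u x\<bar> < 2 powr (real k + 1)"
      using dyadic_ge1[OF True] unfolding k_def by auto
    have "2 powr (real k - 1) < 2 powr real k" by (intro powr_less_mono) auto
    then have "2 powr (real k - 1) < \<bar>u x\<bar>" using kk(1) by linarith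
    then have xE: "x \<in> E k" unfolding E_def by simp
    have "\<bar>u x\<bar> powr q \<le> (2 powr (real k + 1)) powr q"
      using kk q by (intro powr_mono2) auto
    also have "\<dots> = 2 powr ((real k + 1) * q)" by (simp add: powr_powr)
    finally have "ennreal (\<bar>u x\<bar> powr q) \<le> T k x" unfolding T_def using xE by (simp add: ennreal_leI)
    also have "\<dots> \<le> (\<Sum>k. T k x)" by (rule ennreal_term_le_suminf)
    finally show ?thesis by (simp add: add_increasing)
  next
    case False
    have "\<bar>u x\<bar> powr q \<le> \<bar>u x\<bar> powr 2" using False q by (intro powr_mono') auto
    also have "\<dots> = (u x)^2"
      by (cases "u x = 0") (auto simp: powr_numeral)
    finally show ?thesis by (simp add: add_increasing2 ennreal_leI)
  qed
  define S where "S = (\<lambda>k::nat. (A * 2 powr q * 2 powr q1) * (2 powr (q - q1)) ^ k)"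
  have Ss: "summable S" unfolding S_def
    by (intro summable_mult summable_geometric) (use q in \<open>simp add: powr_less_one\<close>)
  have S0: "S k \<ge> 0" for k unfolding S_def using A by simp
  have ui2: "(\<integral>\<^sup>+x. ennreal ((u x)^2) \<partial>lborel) < \<infinity>"
    using ui by (simp add: integrable_iff_bounded)
  have "(\<integral>\<^sup>+x. ennreal (\<bar>u x\<bar> powr q) \<partial>lborel) \<le> (\<integral>\<^sup>+x. ennreal ((u x)^2) + (\<Sum>k. T k x) \<partial>lborel)"
    by (intro nn_integral_mono pt)
  also have "\<dots> = (\<integral>\<^sup>+x. ennreal ((u x)^2) \<partial>lborel) + (\<Sum>k. \<integral>\<^sup>+x. T k x \<partial>lborel)"
    by (subst nn_integral_add) (auto simp: T_def nn_integral_suminf)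
  also have "(\<Sum>k. \<integral>\<^sup>+x. T k x \<partial>lborel) \<le> (\<Sum>k. ennreal (S k))"
  proof (intro suminf_le summableI)
    fix k
    have "(\<integral>\<^sup>+x. T k x \<partial>lborel) = ennreal (2 powr ((real k + 1) * q)) * emeasure lborel (E k)"
      unfolding T_def by (simp add: nn_integral_cmult_indicator)
    also have "\<dots> \<le> ennreal (2 powr ((real k + 1) * q)) * ennreal (A * (2 powr (real k - 1)) powr (- q1))"
      unfolding E_def by (intro mult_left_mono weak) auto
    also have "\<dots> = ennreal (S k)"
    proof -
      have "2 powr ((real k + 1) * q) * (A * (2 powr (real k - 1)) powr (- q1)) = S k"
        unfolding S_def by (simp add: powr_powr powr_power powr_add[symmetric] algebra_simps)
      then show ?thesis by (simp add: ennreal_mult'[symmetric])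
    qed
    finally show "(\<integral>\<^sup>+x. T k x \<partial>lborel) \<le> ennreal (S k)" .
  qed
  also have "(\<Sum>k. ennreal (S k)) < \<infinity>" using ennreal_suminf_neq_top[OF Ss S0] by (simp add: top.not_eq_extremum)
  finally show ?thesis using ui2
    by (auto simp: integrable_iff_bounded ennreal_add_less_top order.strict_trans1)
qed


lemma sobolev_integrable:
  fixes u :: "'a::euclidean_space \<Rightarrow> real"
  assumes uH: "u \<in> Hs s" and s: "s > 0" "2 * s < real DIM('a)"
    and q: "2 \<le> q" "q < 2 * real DIM('a) / (real DIM('a) - 2 * s)"
  shows "integrable lborel (\<lambda>x. \<bar>u x\<bar> powr q)"
proof -
  have um[measurable]: "u \<in> borel_measurable borel" and ui: "integrable lborel (\<lambda>x. (u x)^2)"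
    and G: "gagliardo s u < \<infinity>" using uH by (auto simp: Hs_def)
  define \<theta> where "\<theta> = 2 * s / real DIM('a)"
  define qs where "qs = 2 / (1 - \<theta>)"
  have th: "0 < \<theta>" "\<theta> < 1" unfolding \<theta>_def using s by auto
  have qs_eq: "qs = 2 * real DIM('a) / (real DIM('a) - 2 * s)"
    unfolding qs_def \<theta>_def using s by (simp add: field_simps)
  have qs2: "qs > 2" unfolding qs_def using th by (simp add: field_simps)
  have "(qs - q) / (qs - 2) > 0" using q qs2 qs_eq by simp
  then obtain k where k: "\<theta> ^ k < (qs - q) / (qs - 2)" using real_arch_pow_inv th(2) by blast
  then have "(qs - 2) * \<theta> ^ k < qs - q" using qs2 by (simp add: field_simps)
  then have qk: "q < qs - (qs - 2) * \<theta> ^ k" by simp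
  obtain A where A: "A > 0" "\<forall>L>0. emeasure lborel {x. L < \<bar>u x\<bar>} \<le> ennreal (A * L powr (- (qs - (qs - 2) * \<theta> ^ k)))"
    using weak_iter[OF um ui s G, of k] unfolding \<theta>_def qs_def by blast
  show ?thesis by (rule weak_to_strong[OF um ui A(1) _ q(1) qk]) (use A(2) in auto)
qed

lemma potential_pos:
  fixes u v :: "'a::euclidean_space \<Rightarrow> real"
  assumes "0 < s" "s < 1" "2 * s < real DIM('a)" "1 < p" "p < real DIM('a) / (real DIM('a) - 2 * s)"
    "0 < a1" "0 < a2" "0 < \<mu>1" "0 < \<mu>2" "0 < \<beta>" "u \<in> Ha s a1" "v \<in> Ha s a2"
  shows "potential p \<mu>1 \<mu>2 \<beta> u v > 0"
proof -
  have uH: "u \<in> Hs s" and vH: "v \<in> Hs s" using assms(11,12) by (auto simp: Ha_def)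
  have um[measurable]: "u \<in> borel_measurable borel" and vm[measurable]: "v \<in> borel_measurable borel"
    using uH vH by (auto simp: Hs_def)
  have Npos: "real DIM('a) - 2 * s > 0" using assms(3) by simp
  have q: "2 \<le> 2 * p" "2 * p < 2 * real DIM('a) / (real DIM('a) - 2 * s)"
    using assms(4,5) Npos by (auto simp: field_simps)
  have iu: "integrable lborel (\<lambda>x. \<bar>u x\<bar> powr (2 * p))"
    by (rule sobolev_integrable[OF uH assms(1,3) q])
  have iv: "integrable lborel (\<lambda>x. \<bar>v x\<bar> powr (2 * p))"
    by (rule sobolev_integrable[OF vH assms(1,3) q])
  have cross: "\<bar>u x\<bar> powr p * \<bar>v x\<bar> powr p \<le> (\<bar>u x\<bar> powr (2 * p) + \<bar>v x\<bar> powr (2 * p)) / 2" for x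
  proof -
    have "0 \<le> (\<bar>u x\<bar> powr p - \<bar>v x\<bar> powr p)^2" by simp
    moreover have "(\<bar>u x\<bar> powr p)^2 = \<bar>u x\<bar> powr (2 * p)" "(\<bar>v x\<bar> powr p)^2 = \<bar>v x\<bar> powr (2 * p)"
      by (simp_all add: powr_powr[symmetric] powr_power mult.commute)
    ultimately show ?thesis by (simp add: power2_diff)
  qed
  define W' where "W' = W p \<mu>1 \<mu>2 \<beta> u v"
  have Wnn: "W' x \<ge> 0" for x unfolding W'_def using assms(8-10) by (simp add: W_nonneg)
  have fi: "integrable lborel (\<lambda>x. (\<mu>1 + \<beta>) * \<bar>u x\<bar> powr (2 * p) + (\<mu>2 + \<beta>) * \<bar>v x\<bar> powr (2 * p))"
    using iu iv by simp
  have Wm: "W' \<in> borel_measurable lborel" unfolding W'_def by simp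
  have Wb: "AE x in lborel. norm (W' x) \<le> norm ((\<mu>1 + \<beta>) * \<bar>u x\<bar> powr (2 * p) + (\<mu>2 + \<beta>) * \<bar>v x\<bar> powr (2 * p))"
  proof (intro AE_I2)
    fix x
    have c2: "2 * \<beta> * \<bar>u x\<bar> powr p * \<bar>v x\<bar> powr p \<le> \<beta> * \<bar>u x\<bar> powr (2 * p) + \<beta> * \<bar>v x\<bar> powr (2 * p)"
    proof -
      have "\<beta> * (\<bar>u x\<bar> powr p * \<bar>v x\<bar> powr p) \<le> \<beta> * ((\<bar>u x\<bar> powr (2 * p) + \<bar>v x\<bar> powr (2 * p)) / 2)"
        using cross[of x] assms(10) by (intro mult_left_mono) auto
      then show ?thesis by (simp add: algebra_simps)
    qed
    have "W' x \<le> (\<mu>1 + \<beta>) * \<bar>u x\<bar> powr (2 * p) + (\<mu>2 + \<beta>) * \<bar>v x\<bar> powr (2 * p)"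
      unfolding W'_def W_def using c2 by (simp add: algebra_simps)
    then show "norm (W' x) \<le> norm ((\<mu>1 + \<beta>) * \<bar>u x\<bar> powr (2 * p) + (\<mu>2 + \<beta>) * \<bar>v x\<bar> powr (2 * p))"
      using Wnn[of x] by simp
  qed
  have Wi: "integrable lborel W'" by (rule Bochner_Integration.integrable_bound[OF fi Wm Wb])
  show ?thesis
  proof (rule ccontr)
    assume "\<not> ?thesis"
    moreover have "potential p \<mu>1 \<mu>2 \<beta> u v \<ge> 0" unfolding potential_W W'_def[symmetric] using Wnn by simp
    ultimately have "(\<integral>x. W' x \<partial>lborel) = 0" unfolding potential_W W'_def by simp
    then have "AE x in lborel. W' x = 0" using integral_nonneg_eq_0_iff_AE[OF Wi] Wnn by simp
    then have AE0: "AE x in lborel. u x = 0"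
    proof (rule eventually_mono)
      fix x assume "W' x = 0"
      moreover have "\<mu>1 * \<bar>u x\<bar> powr (2 * p) \<le> W' x" unfolding W'_def W_def
        using assms(8-10) by (intro add_increasing2 add_increasing) auto
      ultimately have "\<mu>1 * \<bar>u x\<bar> powr (2 * p) \<le> 0" by simp
      then have "\<bar>u x\<bar> powr (2 * p) \<le> 0" using assms(8) by (simp add: mult_le_0_iff)
      then show "u x = 0" by simp
    qed
    have "(\<integral>x. (u x)^2 \<partial>lborel) = (\<integral>x. 0 \<partial>(lborel::'a measure))"
      using AE0 by (intro integral_cong_AE) (auto elim: eventually_mono)
    then have "a1^2 = 0" using assms(11) by (simp add: Ha_def)
    then show False using assms(6) by simp
  qed
qed


lemma kinetic_pos:
  fixes u :: "'a::euclidean_space \<Rightarrow> real"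
  assumes "0 < s" "s < 1" "u \<in> Ha s a" "a > 0"
  shows "kinetic s u > 0"
proof -
  have "gagliardo s u < \<infinity>" using assms by (simp add: Ha_def Hs_def)
  moreover have "gagliardo s u > 0" using gagliardo_pos assms by blast
  ultimately have "enn2real (gagliardo s u) > 0"
    by (simp add: enn2real_positive_iff)
  then show ?thesis unfolding kinetic_def using frac_const_pos[of s, where 'a='a] assms by simp
qed

theorem lemma4p6:
  fixes s p a1 a2 \<mu>1 \<mu>2 \<beta> :: real and u v :: "'a::euclidean_space \<Rightarrow> real"
  assumes "0 < s" "s < 1"
    and "2 * s < real DIM('a)" "real DIM('a) \<le> 4 * s"
    and "1 + 2 * s / real DIM('a) < p" "p < real DIM('a) / (real DIM('a) - 2 * s)"
    and "0 < a1" "0 < a2" "0 < \<mu>1" "0 < \<mu>2" "0 < \<beta>"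
    and "u \<in> Ha s a1" "v \<in> Ha s a2"
  shows "(\<exists>!l. (star s l u, star s l v) \<in> Fset s p \<mu>1 \<mu>2 \<beta> a1 a2)
     \<and> (\<exists>l. (star s l u, star s l v) \<in> Fset s p \<mu>1 \<mu>2 \<beta> a1 a2
           \<and> (Psi s p \<mu>1 \<mu>2 \<beta> u v has_real_derivative 0) (at l)
           \<and> (\<forall>l'. (Psi s p \<mu>1 \<mu>2 \<beta> u v has_real_derivative 0) (at l') \<longrightarrow> l' = l)
           \<and> (\<forall>l'. l' \<noteq> l \<longrightarrow> Psi s p \<mu>1 \<mu>2 \<beta> u v l' < Psi s p \<mu>1 \<mu>2 \<beta> u v l))"
proof -
  define N where "N = real DIM('a)"
  have Npos: "N > 0" unfolding N_def by simp
  have p1: "p > 1" using assms(5) assms(1) Npos unfolding N_def[symmetric]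
    by (smt (verit) divide_pos_pos)
  have um[measurable]: "u \<in> borel_measurable borel" and vm[measurable]: "v \<in> borel_measurable borel"
    using assms(12,13) by (auto simp: Ha_def Hs_def)
  define K where "K = kinetic s u + kinetic s v"
  define P where "P = potential p \<mu>1 \<mu>2 \<beta> u v"
  define c where "c = (p - 1) * N / (2 * p * s)"
  define \<alpha> where "\<alpha> = 2 * s^2"
  define \<gamma> where "\<gamma> = N * s * (p - 1)"
  have K: "K > 0" unfolding K_def using kinetic_pos assms by (smt (verit))
  have P: "P > 0" unfolding P_def using potential_pos[OF assms(1,2,3) p1 assms(6-13)] .
  have c: "c > 0" unfolding c_def using p1 Npos assms(1) by simp
  have al: "0 < \<alpha>" using assms(1) by (simp add: \<alpha>_def)
  have ag: "\<alpha> < \<gamma>"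
  proof -
    have "2 * s / N < p - 1" using assms(5) unfolding N_def by simp
    then have "2 * s < N * (p - 1)" using Npos by (simp add: field_simps)
    then have "s * (2 * s) < s * (N * (p - 1))" using assms(1) by simp
    then show ?thesis unfolding \<alpha>_def \<gamma>_def by (simp add: power2_eq_square mult_ac)
  qed
  define g where "g = (\<lambda>l. K * exp (\<alpha> * l) - c * P * exp (\<gamma> * l))"
  have Gst: "Gfun s p \<mu>1 \<mu>2 \<beta> (star s l u) (star s l v) = g l" for l
    unfolding Gfun_def g_def K_def P_def c_def \<alpha>_def \<gamma>_def N_def
    using assms(9-11)
    by (simp add: kinetic_star potential_star algebra_simps)
  have Fiff: "(star s l u, star s l v) \<in> Fset s p \<mu>1 \<mu>2 \<beta> a1 a2 \<longleftrightarrow> g l = 0" for l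
    unfolding Fset_def using star_Ha[OF assms(12)] star_Ha[OF assms(13)] Gst by simp
  have Psi_eq: "Psi s p \<mu>1 \<mu>2 \<beta> u v = (\<lambda>l. 1/2 * (K * exp (\<alpha> * l)) - 1 / (2 * p) * (P * exp (\<gamma> * l)))"
    unfolding Psi_def energy_def K_def P_def \<alpha>_def \<gamma>_def N_def
    using assms(9-11)
    by (intro ext) (simp add: kinetic_star potential_star algebra_simps)
  have d: "(Psi s p \<mu>1 \<mu>2 \<beta> u v has_real_derivative (s^2 * g l)) (at l)" for l
  proof -
    have "((\<lambda>l. 1/2 * (K * exp (\<alpha> * l)) - 1 / (2 * p) * (P * exp (\<gamma> * l))) has_real_derivative
       (1/2 * (K * (exp (\<alpha> * l) * \<alpha>)) - 1 / (2 * p) * (P * (exp (\<gamma> * l) * \<gamma>)))) (at l)"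
      using p1 by (auto intro!: derivative_eq_intros simp: mult_ac)
    moreover have "1/2 * (K * (exp (\<alpha> * l) * \<alpha>)) - 1 / (2 * p) * (P * (exp (\<gamma> * l) * \<gamma>)) = s^2 * g l"
      unfolding g_def c_def \<alpha>_def \<gamma>_def using assms(1) p1
      by (simp add: field_simps power2_eq_square)
    ultimately show ?thesis unfolding Psi_eq by simp
  qed
  have s2: "s^2 > 0" using assms(1) by simp
  show ?thesis unfolding Fiff
    by (rule final_real[OF K P c s2 al ag g_def[THEN fun_cong] d])
qed


end
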